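(* Consider the Gaussian mean estimation problem described in the context, with any $n\ge1$. Then both quantities $$\mathbb E\Big[\Psi^{*-1}_{\tilde E|Z^\pm_{[n]}}\big(I_{Z^\pm_{[n]}}(W;R_{[n]})\big)\Big]\quad\text{and}\quad \frac1n\sum_{i=1}^n\mathbb E\Big[\Psi^{*-1}_{\tilde E_i|Z^\pm_{[n]}}\big(I_{Z^\pm_{[n]}}(W;R_i)\big)\Big]$$ are at least $\dfrac{\sigma^2}{\pi\sqrt{\log_2 e}}$.
   Context: Gaussian mean estimation: data space $\mathcal Z=\mathbb R$, $\xi=N(\mu,\sigma^2)$ for some $\mu\in\mathbb R$, $\sigma>0$; parameter space $\mathcal W=\mathbb R$; loss $\ell(w,z)=(w-z)^2$; the algorithm deterministically outputs the average of its $n$ training samples. Supersample construction: $Z_i^-,Z_i^+$ ($i=1,\dots,n$) are $2n$ i.i.d. samples from $\xi$, $Z_i^\pm=(Z_i^-,Z_i^+)$, $Z^\pm_{[n]}=(Z_1^\pm,\dots,Z_n^\pm)$; $R_{[n]}=(R_1,\dots,R_n)$ i.i.d. uniform on $\{-1,1\}$ independent of the samples; $W=\frac1n\sum_{i=1}^n Z_i^{R_i}$ with $Z_i^{1}=Z_i^+$, $Z_i^{-1}=Z_i^-$. Let $(\tilde R_{[n]},\tilde W)$ be a decoupled pair of $(R_{[n]},W)$ conditioned on $Z^\pm_{[n]}$, i.e. jointly defined with $Z^\pm_{[n]}$ so that $(\tilde R_{[n]},Z^\pm_{[n]})\overset{D}{=}(R_{[n]},Z^\pm_{[n]})$, $(\tilde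 W,Z^\pm_{[n]})\overset{D}{=}(W,Z^\pm_{[n]})$, and $\tilde R_{[n]}-Z^\pm_{[n]}-\tilde W$ is a Markov chain. Define $\tilde E_i=\tilde R_i(\ell(\tilde W,Z_i^-)-\ell(\tilde W,Z_i^+))$ and $\tilde E=\frac1n\sum_{i=1}^n\tilde E_i$. $I_{U}(X;Y)$ denotes $I(X;Y\mid U=u)$ evaluated at $u=U$; mutual information in nats. For random variables $F,U$: $\psi_{F|U}(\lambda,u)=\ln\mathbb E[e^{\lambda(F-\mathbb E[F|U=u])}\mid U=u]$, $\psi^{*-1}_{F|U}(\eta,u)=\inf_{\lambda>0}\frac{\eta+\psi_{F|U}(\lambda,u)}{\lambda}$, and $\Psi^{*-1}_{F|U}(\eta)=\psi^{*-1}_{F|U}(\eta,U)$. *)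

theory Defs
  imports "HOL-Probability.Probability"
begin

text \<open>Gaussian mean estimation with the supersample construction.
  Indices run over 1..n. A supersample is z :: nat => real * real with
  z i = (Z_i^-, Z_i^+). Selector r_i in {-1,1}.\<close>

definition loss :: "real \<Rightarrow> real \<Rightarrow> real" where
  "loss w x = (w - x)^2"

definition sel :: "real \<times> real \<Rightarrow> real \<Rightarrow> real" where
  "sel p r = (if r = 1 then snd p else fst p)"

definition Rdist :: "nat \<Rightarrow> (nat \<Rightarrow> real) pmf" where
  "Rdist n = pmf_of_set (PiE {1..n} (\<lambda>_. {-1, 1}))"

definition Wout :: "nat \<Rightarrow> (nat \<Rightarrow> real \<times> real) \<Rightarrow> (nat \<Rightarrow> real) \<Rightarrow> real" where
  "Wout n z r = (\<Sum>i=1..n. sel (z i) (r i)) / real n"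

definition Wdist :: "nat \<Rightarrow> (nat \<Rightarrow> real \<times> real) \<Rightarrow> real pmf" where
  "Wdist n z = map_pmf (Wout n z) (Rdist n)"

text \<open>Conditional joint law of the decoupled pair (R~, W~) given Z^pm = z:
  by the Markov chain condition they are conditionally independent with the
  conditional marginals of R and W.\<close>
definition decoupled :: "nat \<Rightarrow> (nat \<Rightarrow> real \<times> real) \<Rightarrow> ((nat \<Rightarrow> real) \<times> real) pmf" where
  "decoupled n z = pair_pmf (Rdist n) (Wdist n z)"

definition Etil_i :: "(nat \<Rightarrow> real \<times> real) \<Rightarrow> nat \<Rightarrow> (nat \<Rightarrow> real) \<Rightarrow> real \<Rightarrow> real" where
  "Etil_i z i r w = r i * (loss w (fst (z i)) - loss w (snd (z i)))"

definition Etil :: "nat \<Rightarrow> (nat \<Rightarrow> real \<times> real) \<Rightarrow> (nat \<Rightarrow> real) \<Rightarrow> real \<Rightarrow> real" where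
  "Etil n z r w = (\<Sum>i=1..n. Etil_i z i r w) / real n"

text \<open>Mutual information (nats) of a discrete joint law.\<close>
definition mutual_info_pmf :: "('a \<times> 'b) pmf \<Rightarrow> real" where
  "mutual_info_pmf p = measure_pmf.expectation p
     (\<lambda>(x, y). ln (pmf p (x, y) / (pmf (map_pmf fst p) x * pmf (map_pmf snd p) y)))"

text \<open>Conditional cumulant generating function psi_{F|U}(l,u), where F is the
  conditional law of F given U = u.\<close>
definition cgf :: "real pmf \<Rightarrow> real \<Rightarrow> real" where
  "cgf F l = ln (measure_pmf.expectation F
      (\<lambda>x. exp (l * (x - measure_pmf.expectation F (\<lambda>y. y)))))"

definition cgf_star_inv :: "real pmf \<Rightarrow> real \<Rightarrow> real" where
  "cgf_star_inv F \<eta> = (INF l\<in>{0<..}. (\<eta> + cgf F l) / l)"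

definition gauss :: "real \<Rightarrow> real \<Rightarrow> real measure" where
  "gauss \<mu> \<sigma> = density lborel (normal_density \<mu> \<sigma>)"

definition supersample :: "nat \<Rightarrow> real \<Rightarrow> real \<Rightarrow> (nat \<Rightarrow> real \<times> real) measure" where
  "supersample n \<mu> \<sigma> = PiM {1..n} (\<lambda>_. gauss \<mu> \<sigma> \<Otimes>\<^sub>M gauss \<mu> \<sigma>)"

end

theory Submission
  imports Defs
begin

definition PP :: "nat \<Rightarrow> (nat \<Rightarrow> real) set" where
  "PP n = PiE {1..n} (\<lambda>_. {-1, 1::real})"

lemma Rdist_PP: "Rdist n = pmf_of_set (PP n)" unfolding Rdist_def PP_def ..

definition Xi :: "(nat \<Rightarrow> real \<times> real) \<Rightarrow> nat \<Rightarrow> real \<Rightarrow> real" where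
  "Xi z i w = (snd (z i) - fst (z i)) * (2*w - fst (z i) - snd (z i))"

lemma Etil_i_eq: "Etil_i z i r w = r i * Xi z i w"
  unfolding Etil_i_def Xi_def loss_def by (simp add: power2_eq_square algebra_simps)

lemma finite_PP[simp]: "finite (PP n)" unfolding PP_def by (intro finite_PiE) auto
lemma PP_ne[simp]: "PP n \<noteq> {}" unfolding PP_def by (simp add: PiE_eq_empty_iff)
lemma card_PP: "card (PP n) = 2^n"
  unfolding PP_def by (simp add: card_PiE numeral_2_eq_2)

lemma PP_val: "r \<in> PP n \<Longrightarrow> i \<in> {1..n} \<Longrightarrow> r i = -1 \<or> r i = 1"
  unfolding PP_def by (auto simp: PiE_iff)

lemma flip_in: "r \<in> PP n \<Longrightarrow> i \<in> {1..n} \<Longrightarrow> r(i := - r i) \<in> PP n"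
  unfolding PP_def by (auto simp: PiE_iff extensional_def)

lemma sum_flip:
  assumes i: "i \<in> {1..n}"
  shows "(\<Sum>r\<in>PP n. g r) = (\<Sum>r\<in>PP n. g (r(i := - r i)))"
proof (rule sum.reindex_bij_witness[where i="\<lambda>r. r(i := - r i)" and j="\<lambda>r. r(i := - r i)"])
  fix r assume "r \<in> PP n"
  then show "r(i := - r i) \<in> PP n" using flip_in[OF _ i] by blast
qed (use i in \<open>auto simp: PP_def PiE_iff extensional_def\<close>)

lemma sum_coord: assumes "i \<in> {1..n}" shows "(\<Sum>r\<in>PP n. r i) = 0"
proof -
  have "(\<Sum>r\<in>PP n. r i) = (\<Sum>r\<in>PP n. - r i)"
    using sum_flip[OF assms, of "\<lambda>r. r i"] by simp
  also have "\<dots> = - (\<Sum>r\<in>PP n. r i)" by (simp add: sum_negf)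
  finally show ?thesis by simp
qed

lemma sum_coord_mult: assumes "i \<in> {1..n}" shows "(\<Sum>r\<in>PP n. r i * c) = 0"
  using sum_coord[OF assms] by (simp add: sum_distrib_right[symmetric])

lemma sel_eq: "r = -1 \<or> r = 1 \<Longrightarrow> sel p r = (fst p + snd p)/2 + r*(snd p - fst p)/2"
  unfolding sel_def by (auto simp: field_simps)

definition wbar :: "nat \<Rightarrow> (nat \<Rightarrow> real \<times> real) \<Rightarrow> real" where
  "wbar n z = (\<Sum>j=1..n. fst (z j) + snd (z j)) / (2 * real n)"

lemma sum_sel: assumes "j \<in> {1..n}"
  shows "(\<Sum>r\<in>PP n. sel (z j) (r j)) = real (card (PP n)) * ((fst (z j) + snd (z j))/2)"
proof -
  have "(\<Sum>r\<in>PP n. sel (z j) (r j)) = (\<Sum>r\<in>PP n. (fst (z j) + snd (z j))/2 + r j * ((snd (z j) - fst (z j))/2))"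
    by (intro sum.cong refl) (use PP_val[OF _ assms] sel_eq in auto)
  also have "\<dots> = real (card (PP n)) * ((fst (z j) + snd (z j))/2)"
    using sum_coord_mult[OF assms, of "snd (z j) - fst (z j)"]
    by (simp add: sum.distrib sum_divide_distrib[symmetric])
  finally show ?thesis .
qed

lemma sum_Wout: assumes "n \<ge> 1"
  shows "(\<Sum>r\<in>PP n. Wout n z r) = real (card (PP n)) * wbar n z"
proof -
  have "(\<Sum>r\<in>PP n. Wout n z r) = (\<Sum>j=1..n. \<Sum>r\<in>PP n. sel (z j) (r j)) / real n"
    unfolding Wout_def sum_divide_distrib[symmetric]
    by (subst sum.swap) (rule refl)
  also have "\<dots> = (\<Sum>j=1..n. real (card (PP n)) * ((fst (z j) + snd (z j))/2)) / real n"
    by (rule arg_cong[where f="\<lambda>x. x / real n"], rule sum.cong[OF refl], rule sum_sel)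
  also have "\<dots> = real (card (PP n)) * wbar n z"
    unfolding wbar_def using assms
    by (simp add: sum_distrib_left sum_divide_distrib[symmetric] field_simps)
  finally show ?thesis .
qed

lemma E_dec:
  "measure_pmf.expectation (map_pmf h (decoupled n z)) g =
     (\<Sum>r\<in>PP n. \<Sum>r'\<in>PP n. g (h (r, Wout n z r'))) / (real (card (PP n)))^2"
proof -
  have "decoupled n z = map_pmf (apsnd (Wout n z)) (pair_pmf (Rdist n) (Rdist n))"
    unfolding decoupled_def Wdist_def by (simp add: pair_map_pmf2)
  then have "measure_pmf.expectation (map_pmf h (decoupled n z)) g =
      measure_pmf.expectation (pair_pmf (Rdist n) (Rdist n)) (\<lambda>x. g (h (apsnd (Wout n z) x)))"
    by (simp add: map_pmf_comp)
  also have "\<dots> = (\<Sum>x\<in>PP n \<times> PP n. pmf (pair_pmf (Rdist n) (Rdist n)) x * g (h (apsnd (Wout n z) x)))"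
    by (subst integral_measure_pmf[where A="PP n \<times> PP n"])
       (auto simp: Rdist_PP)
  also have "\<dots> = (\<Sum>x\<in>PP n \<times> PP n. g (h (apsnd (Wout n z) x)) / (real (card (PP n)))^2)"
    by (intro sum.cong refl) (auto simp: pmf_pair Rdist_PP power2_eq_square)
  also have "\<dots> = (\<Sum>r\<in>PP n. \<Sum>r'\<in>PP n. g (h (r, Wout n z r'))) / (real (card (PP n)))^2"
    by (simp add: sum.cartesian_product case_prod_beta apsnd_def map_prod_def sum_divide_distrib)
  finally show ?thesis .
qed

lemma exp_avg:
  assumes "finite S" "S \<noteq> {}"
  shows "real (card S) * exp ((\<Sum>x\<in>S. f x) / card S) \<le> (\<Sum>x\<in>S. exp (f x))"
proof -
  define m where "m = (\<Sum>x\<in>S. f x) / card S"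
  have cS: "real (card S) > 0" using assms by (simp add: card_gt_0_iff)
  have "\<And>x. exp m * (1 + (f x - m)) \<le> exp (f x)"
  proof -
    fix x
    have "exp m * (1 + (f x - m)) \<le> exp m * exp (f x - m)"
      by (intro mult_left_mono exp_ge_add_one_self) simp
    also have "\<dots> = exp (f x)" by (simp add: exp_diff)
    finally show "exp m * (1 + (f x - m)) \<le> exp (f x)" .
  qed
  then have "(\<Sum>x\<in>S. exp m * (1 + (f x - m))) \<le> (\<Sum>x\<in>S. exp (f x))"
    by (intro sum_mono)
  moreover have "(\<Sum>x\<in>S. exp m * (1 + (f x - m))) = exp m * (card S + (\<Sum>x\<in>S. f x) - card S * m)"
    by (simp add: sum_distrib_left[symmetric] sum.distrib sum_subtractf algebra_simps)
  moreover have "card S + (\<Sum>x\<in>S. f x) - card S * m = card S"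
    unfolding m_def using cS by simp
  ultimately show ?thesis unfolding m_def by (simp add: mult.commute)
qed

definition Gf :: "nat \<Rightarrow> (nat \<Rightarrow> real \<times> real) \<Rightarrow> real" where
  "Gf n z = (\<Sum>r'\<in>PP n. (\<Sum>i=1..n. \<bar>Xi z i (Wout n z r')\<bar>) / n) / card (PP n)"

definition Gi :: "nat \<Rightarrow> (nat \<Rightarrow> real \<times> real) \<Rightarrow> nat \<Rightarrow> real" where
  "Gi n z i = (\<Sum>r'\<in>PP n. \<bar>Xi z i (Wout n z r')\<bar>) / card (PP n)"

lemma Etil_eq: "Etil n z r w = (\<Sum>i=1..n. r i * Xi z i w) / n"
  unfolding Etil_def by (simp add: Etil_i_eq)

lemma sum_Etil_zero: "(\<Sum>r\<in>PP n. Etil n z r w) = 0"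
proof -
  have "(\<Sum>r\<in>PP n. Etil n z r w) = (\<Sum>i=1..n. \<Sum>r\<in>PP n. r i * Xi z i w) / n"
    unfolding Etil_eq sum_divide_distrib[symmetric] by (subst sum.swap) (rule refl)
  also have "\<dots> = 0"
    by (simp add: sum_coord_mult del: One_nat_def)
  finally show ?thesis .
qed

lemma mean_full:
  "measure_pmf.expectation (map_pmf (\<lambda>(r,w). Etil n z r w) (decoupled n z)) (\<lambda>y. y) = 0"
  unfolding E_dec
  by (subst sum.swap) (simp add: sum_Etil_zero)

lemma sum_coord_mult': "i \<in> {1..n} \<Longrightarrow> (\<Sum>r\<in>PP n. r i * c) = 0"
  by (rule sum_coord_mult)

lemma mean_ind:
  assumes "i \<in> {1..n}"
  shows "measure_pmf.expectation (map_pmf (\<lambda>(r,w). Etil_i z i r w) (decoupled n z)) (\<lambda>y. y) = 0"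
  unfolding E_dec Etil_i_eq
  by (subst sum.swap) (simp add: sum_coord_mult'[OF assms])

lemma cgf_full:
  assumes n: "n \<ge> 1" and l: "l > 0"
  shows "cgf (map_pmf (\<lambda>(r,w). Etil n z r w) (decoupled n z)) l \<ge> l * Gf n z - ln (card (PP n))"
proof -
  define N where "N = real (card (PP n))"
  have N0: "N > 0" unfolding N_def by (simp add: card_gt_0_iff)
  define a where "a r' = (\<Sum>i=1..n. \<bar>Xi z i (Wout n z r')\<bar>) / n" for r'
  have inner: "exp (l * a r') \<le> (\<Sum>r\<in>PP n. exp (l * Etil n z r (Wout n z r')))" for r'
  proof -
    define s where "s = (\<lambda>i. if i \<in> {1..n} then (if Xi z i (Wout n z r') \<ge> 0 then 1 else -1::real) else undefined)"
    have sP: "s \<in> PP n" unfolding PP_def s_def by (auto simp: PiE_iff extensional_def)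
    have "Etil n z s (Wout n z r') = a r'"
      unfolding Etil_eq a_def
      by (intro arg_cong[where f="\<lambda>x. x / real n"] sum.cong refl) (auto simp: s_def)
    then have "exp (l * a r') = exp (l * Etil n z s (Wout n z r'))" by simp
    also have "\<dots> \<le> (\<Sum>r\<in>PP n. exp (l * Etil n z r (Wout n z r')))"
      by (rule member_le_sum[OF sP]) auto
    finally show ?thesis .
  qed
  have "N * exp (l * Gf n z) = N * exp ((\<Sum>r'\<in>PP n. l * a r') / N)"
    unfolding Gf_def a_def N_def by (simp add: sum_distrib_left)
  also have "\<dots> \<le> (\<Sum>r'\<in>PP n. exp (l * a r'))"
    unfolding N_def by (rule exp_avg) auto
  also have "\<dots> \<le> (\<Sum>r'\<in>PP n. \<Sum>r\<in>PP n. exp (l * Etil n z r (Wout n z r')))"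
    by (intro sum_mono inner)
  finally have main: "N * exp (l * Gf n z) \<le> (\<Sum>r\<in>PP n. \<Sum>r'\<in>PP n. exp (l * Etil n z r (Wout n z r')))"
    by (subst sum.swap)
  have E: "measure_pmf.expectation (map_pmf (\<lambda>(r,w). Etil n z r w) (decoupled n z))
      (\<lambda>x. exp (l * (x - measure_pmf.expectation (map_pmf (\<lambda>(r,w). Etil n z r w) (decoupled n z)) (\<lambda>y. y))))
     = (\<Sum>r\<in>PP n. \<Sum>r'\<in>PP n. exp (l * Etil n z r (Wout n z r'))) / N^2"
    by (subst mean_full, subst E_dec) (simp add: N_def)
  have "exp (l * Gf n z) / N \<le> (\<Sum>r\<in>PP n. \<Sum>r'\<in>PP n. exp (l * Etil n z r (Wout n z r'))) / N^2"
    using main N0 by (simp add: field_simps power2_eq_square)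
  then have "ln (exp (l * Gf n z) / N) \<le> cgf (map_pmf (\<lambda>(r,w). Etil n z r w) (decoupled n z)) l"
    unfolding cgf_def E using N0 by (intro ln_mono) auto
  then show ?thesis using N0 by (simp add: ln_div N_def)
qed

lemma cgf_ind:
  assumes i: "i \<in> {1..n}" and l: "l > 0"
  shows "cgf (map_pmf (\<lambda>(r,w). Etil_i z i r w) (decoupled n z)) l \<ge> l * Gi n z i - ln 2"
proof -
  define N where "N = real (card (PP n))"
  have N0: "N > 0" unfolding N_def by (simp add: card_gt_0_iff)
  have inner: "N/2 * exp (l * \<bar>c\<bar>) \<le> (\<Sum>r\<in>PP n. exp (l * (r i * c)))" for c
  proof -
    have flip: "(\<Sum>r\<in>PP n. exp (l * (r i * c))) = (\<Sum>r\<in>PP n. exp (- (l * (r i * c))))"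
      using sum_flip[OF i, of "\<lambda>r. exp (l * (r i * c))"] by simp
    have "N * exp (l * \<bar>c\<bar>) = (\<Sum>r\<in>PP n. exp (l * \<bar>c\<bar>))" unfolding N_def by simp
    also have "\<dots> \<le> (\<Sum>r\<in>PP n. exp (l * (r i * c)) + exp (- (l * (r i * c))))"
    proof (intro sum_mono)
      fix r assume "r \<in> PP n"
      then have "r i = -1 \<or> r i = 1" using PP_val i by blast
      then have "l * \<bar>c\<bar> = l * (r i * c) \<or> l * \<bar>c\<bar> = - (l * (r i * c))"
        by (cases "c \<ge> 0") auto
      then show "exp (l * \<bar>c\<bar>) \<le> exp (l * (r i * c)) + exp (- (l * (r i * c)))"
        by (metis add_increasing add_increasing2 exp_ge_zero order_refl)
    qed
    also have "\<dots> = 2 * (\<Sum>r\<in>PP n. exp (l * (r i * c)))"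
      by (simp add: sum.distrib flip[symmetric])
    finally show ?thesis by simp
  qed
  have "N/2 * (N * exp (l * Gi n z i)) = N/2 * (N * exp ((\<Sum>r'\<in>PP n. l * \<bar>Xi z i (Wout n z r')\<bar>) / N))"
    unfolding Gi_def N_def by (simp add: sum_distrib_left)
  also have "\<dots> \<le> N/2 * (\<Sum>r'\<in>PP n. exp (l * \<bar>Xi z i (Wout n z r')\<bar>))"
    using N0 unfolding N_def by (intro mult_left_mono exp_avg) auto
  also have "\<dots> \<le> (\<Sum>r'\<in>PP n. \<Sum>r\<in>PP n. exp (l * (r i * Xi z i (Wout n z r'))))"
    unfolding sum_distrib_left by (intro sum_mono inner)
  finally have main: "N/2 * (N * exp (l * Gi n z i)) \<le> (\<Sum>r\<in>PP n. \<Sum>r'\<in>PP n. exp (l * (r i * Xi z i (Wout n z r'))))"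
    by (subst sum.swap)
  have E: "measure_pmf.expectation (map_pmf (\<lambda>(r,w). Etil_i z i r w) (decoupled n z))
      (\<lambda>x. exp (l * (x - measure_pmf.expectation (map_pmf (\<lambda>(r,w). Etil_i z i r w) (decoupled n z)) (\<lambda>y. y))))
     = (\<Sum>r\<in>PP n. \<Sum>r'\<in>PP n. exp (l * (r i * Xi z i (Wout n z r')))) / N^2"
    by (subst mean_ind[OF i], subst E_dec) (simp add: N_def Etil_i_eq)
  have "exp (l * Gi n z i) / 2 \<le> (\<Sum>r\<in>PP n. \<Sum>r'\<in>PP n. exp (l * (r i * Xi z i (Wout n z r')))) / N^2"
    using main N0 by (simp add: field_simps power2_eq_square)
  then have "ln (exp (l * Gi n z i) / 2) \<le> cgf (map_pmf (\<lambda>(r,w). Etil_i z i r w) (decoupled n z)) l"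
    unfolding cgf_def E using N0 by (intro ln_mono) auto
  then show ?thesis by (simp add: ln_div)
qed

lemma star_inv_ge:
  assumes "\<And>l. l > 0 \<Longrightarrow> cgf F l \<ge> l * G - \<eta>"
  shows "cgf_star_inv F \<eta> \<ge> G"
  unfolding cgf_star_inv_def
proof (rule cINF_greatest)
  show "{0::real<..} \<noteq> {}" by auto
  fix l :: real assume "l \<in> {0<..}"
  then have l: "l > 0" by simp
  have "l * G \<le> \<eta> + cgf F l" using assms[OF l] by simp
  then show "G \<le> (\<eta> + cgf F l) / l" using l by (simp add: field_simps)
qed

lemma card_half:
  assumes i: "i \<in> {1..n}" and s: "s = -1 \<or> s = 1"
  shows "real (card (PP n \<inter> {r. r i = s})) = real (card (PP n)) / 2"
proof -
  have "real (card (PP n \<inter> {r. r i = s})) = (\<Sum>r\<in>{r\<in>PP n. r i = s}. 1)"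
    by (simp add: Int_def conj_commute)
  also have "\<dots> = (\<Sum>r\<in>PP n. if r i = s then 1 else 0)"
    by (rule sum.inter_filter) simp
  also have "\<dots> = (\<Sum>r\<in>PP n. 1/2 + r i * (s/2))"
  proof (intro sum.cong refl)
    fix r assume "r \<in> PP n"
    then have "r i = -1 \<or> r i = 1" using PP_val i by blast
    then show "(if r i = s then 1 else 0) = 1/2 + r i * (s/2)" using s by auto
  qed
  also have "\<dots> = real (card (PP n)) / 2"
    by (simp add: sum.distrib sum_divide_distrib[symmetric] sum_distrib_right[symmetric] sum_coord[OF i])
  finally show ?thesis .
qed

lemma pmf_R: "r \<in> PP n \<Longrightarrow> pmf (Rdist n) r = 1 / real (card (PP n))"
  by (simp add: Rdist_PP)

lemma MI_full:
  assumes inj: "inj_on (Wout n z) (PP n)"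
  shows "mutual_info_pmf (map_pmf (\<lambda>r. (Wout n z r, r)) (Rdist n)) = ln (card (PP n))"
proof -
  define N where "N = real (card (PP n))"
  have N0: "N > 0" unfolding N_def by (simp add: card_gt_0_iff)
  define p where "p = map_pmf (\<lambda>r. (Wout n z r, r)) (Rdist n)"
  have injf: "inj_on (\<lambda>r. (Wout n z r, r)) (set_pmf (Rdist n))" by (auto intro: inj_onI)
  have fstp: "map_pmf fst p = map_pmf (Wout n z) (Rdist n)" unfolding p_def by (simp add: map_pmf_comp)
  have sndp: "map_pmf snd p = Rdist n" unfolding p_def by (simp add: map_pmf_comp)
  have "mutual_info_pmf p = measure_pmf.expectation (map_pmf (\<lambda>r. (Wout n z r, r)) (Rdist n))
      (\<lambda>(x, y). ln (pmf p (x, y) / (pmf (map_pmf fst p) x * pmf (map_pmf snd p) y)))"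
    unfolding mutual_info_pmf_def p_def ..
  also have "\<dots> = measure_pmf.expectation (Rdist n)
      (\<lambda>r. ln (pmf p (Wout n z r, r) / (pmf (map_pmf fst p) (Wout n z r) * pmf (map_pmf snd p) (r))))"
    by simp
  also have "\<dots> = (\<Sum>r\<in>PP n. ln N) / N"
    unfolding Rdist_PP integral_pmf_of_set[OF PP_ne finite_PP] N_def
  proof (intro arg_cong[where f="\<lambda>x. x / _"] sum.cong refl)
    fix r assume r: "r \<in> PP n"
    have "pmf p (Wout n z r, r) = pmf (Rdist n) r"
      unfolding p_def by (rule pmf_map_inj[OF injf]) (simp add: Rdist_PP r)
    moreover have "pmf (map_pmf fst p) (Wout n z r) = pmf (Rdist n) r"
      unfolding fstp by (rule pmf_map_inj) (simp_all add: Rdist_PP r inj)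
    ultimately show "ln (pmf p (Wout n z r, r) / (pmf (map_pmf fst p) (Wout n z r) * pmf (map_pmf snd p) r)) = ln (real (card (PP n)))"
      unfolding sndp pmf_R[OF r] using N0 by (simp add: N_def)
  qed
  also have "\<dots> = ln N" using N0 by (simp add: N_def)
  finally show ?thesis unfolding p_def N_def .
qed

lemma MI_ind:
  assumes inj: "inj_on (Wout n z) (PP n)" and i: "i \<in> {1..n}"
  shows "mutual_info_pmf (map_pmf (\<lambda>r. (Wout n z r, r i)) (Rdist n)) = ln 2"
proof -
  define N where "N = real (card (PP n))"
  have N0: "N > 0" unfolding N_def by (simp add: card_gt_0_iff)
  define p where "p = map_pmf (\<lambda>r. (Wout n z r, r i)) (Rdist n)"
  have injf: "inj_on (\<lambda>r. (Wout n z r, r i)) (set_pmf (Rdist n))"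
    using inj by (auto intro!: inj_onI simp: Rdist_PP dest: inj_onD)
  have fstp: "map_pmf fst p = map_pmf (Wout n z) (Rdist n)" unfolding p_def by (simp add: map_pmf_comp)
  have sndp: "map_pmf snd p = map_pmf (\<lambda>r. r i) (Rdist n)" unfolding p_def by (simp add: map_pmf_comp)
  have "mutual_info_pmf p = measure_pmf.expectation (map_pmf (\<lambda>r. (Wout n z r, r i)) (Rdist n))
      (\<lambda>(x, y). ln (pmf p (x, y) / (pmf (map_pmf fst p) x * pmf (map_pmf snd p) y)))"
    unfolding mutual_info_pmf_def p_def ..
  also have "\<dots> = measure_pmf.expectation (Rdist n)
      (\<lambda>r. ln (pmf p (Wout n z r, r i) / (pmf (map_pmf fst p) (Wout n z r) * pmf (map_pmf snd p) (r i))))"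
    by simp
  also have "\<dots> = (\<Sum>r\<in>PP n. ln 2) / N"
    unfolding Rdist_PP integral_pmf_of_set[OF PP_ne finite_PP] N_def
  proof (intro arg_cong[where f="\<lambda>x. x / _"] sum.cong refl)
    fix r assume r: "r \<in> PP n"
    have a1: "pmf p (Wout n z r, r i) = pmf (Rdist n) r"
      unfolding p_def by (rule pmf_map_inj[OF injf]) (simp add: Rdist_PP r)
    have a2: "pmf (map_pmf fst p) (Wout n z r) = pmf (Rdist n) r"
      unfolding fstp by (rule pmf_map_inj) (simp_all add: Rdist_PP r inj)
    have a3: "pmf (map_pmf snd p) (r i) = 1/2"
    proof -
      have "pmf (map_pmf snd p) (r i) = measure (Rdist n) ((\<lambda>r. r i) -` {r i})"
        unfolding sndp pmf_map ..
      also have "\<dots> = real (card (PP n \<inter> {r'. r' i = r i})) / N"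
        unfolding Rdist_PP measure_pmf_of_set[OF PP_ne finite_PP] N_def
        by (simp add: vimage_def)
      also have "\<dots> = 1/2" using card_half[OF i PP_val[OF r i]] N0 by (simp add: N_def)
      finally show ?thesis .
    qed
    show "ln (pmf p (Wout n z r, r i) / (pmf (map_pmf fst p) (Wout n z r) * pmf (map_pmf snd p) (r i))) = ln 2"
      unfolding a1 a2 a3 pmf_R[OF r] using N0 by (simp add: N_def)
  qed
  also have "\<dots> = ln 2" using N0 by (simp add: N_def)
  finally show ?thesis unfolding p_def N_def .
qed

lemma prob_gauss: "\<sigma> > 0 \<Longrightarrow> prob_space (gauss \<mu> \<sigma>)"
  unfolding gauss_def by (rule prob_space_normal_density)

lemma sets_gauss[simp, measurable_cong]: "sets (gauss \<mu> \<sigma>) = sets borel"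
  unfolding gauss_def by simp

lemma space_gauss[simp]: "space (gauss \<mu> \<sigma>) = UNIV"
  unfolding gauss_def by simp

lemma gauss_HB:
  assumes s: "\<sigma> > 0"
  shows "has_bochner_integral lborel
    (\<lambda>x. normal_density \<mu> \<sigma> x * (p + q * \<bar>x - \<mu>\<bar> + t * (x - \<mu>) + r * (x - \<mu>)^2))
    (p + q * (\<sigma> * sqrt (2 / pi)) + r * \<sigma>^2)"
proof -
  have h0: "has_bochner_integral lborel (\<lambda>x. normal_density \<mu> \<sigma> x) 1"
    using normal_moment_even[OF s, where k=0 and \<mu>=\<mu>] by simp
  have h1: "has_bochner_integral lborel (\<lambda>x. normal_density \<mu> \<sigma> x * \<bar>x - \<mu>\<bar>) (\<sigma> * sqrt (2 / pi))"
    using normal_moment_abs_odd[OF s, where k=0 and \<mu>=\<mu>] by simp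
  have h2: "has_bochner_integral lborel (\<lambda>x. normal_density \<mu> \<sigma> x * (x - \<mu>)) 0"
    using normal_moment_odd[OF s, where k=0 and \<mu>=\<mu>] by simp
  have h3: "has_bochner_integral lborel (\<lambda>x. normal_density \<mu> \<sigma> x * (x - \<mu>)^2) (\<sigma>^2)"
    using normal_moment_even[OF s, where k=1 and \<mu>=\<mu>] by (simp add: power2_eq_square)
  have "has_bochner_integral lborel
    (\<lambda>x. p * normal_density \<mu> \<sigma> x + q * (normal_density \<mu> \<sigma> x * \<bar>x - \<mu>\<bar>)
       + t * (normal_density \<mu> \<sigma> x * (x - \<mu>)) + r * (normal_density \<mu> \<sigma> x * (x - \<mu>)^2))
    (p * 1 + q * (\<sigma> * sqrt (2 / pi)) + t * 0 + r * \<sigma>^2)"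
    by (intro has_bochner_integral_add has_bochner_integral_mult_right h0 h1 h2 h3)
  then show ?thesis
    by (simp add: algebra_simps)
qed

lemma gauss_nn:
  assumes s: "\<sigma> > 0" and nn: "\<And>x. 0 \<le> p + q * \<bar>x - \<mu>\<bar> + t * (x - \<mu>) + r * (x - \<mu>)^2"
  shows "(\<integral>\<^sup>+x. ennreal (p + q * \<bar>x - \<mu>\<bar> + t * (x - \<mu>) + r * (x - \<mu>)^2) \<partial>gauss \<mu> \<sigma>)
    = ennreal (p + q * (\<sigma> * sqrt (2 / pi)) + r * \<sigma>^2)"
proof -
  note HB = gauss_HB[OF s, of \<mu> p q t r]
  have "(\<integral>\<^sup>+x. ennreal (p + q * \<bar>x - \<mu>\<bar> + t * (x - \<mu>) + r * (x - \<mu>)^2) \<partial>gauss \<mu> \<sigma>)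
     = (\<integral>\<^sup>+x. ennreal (normal_density \<mu> \<sigma> x) * ennreal (p + q * \<bar>x - \<mu>\<bar> + t * (x - \<mu>) + r * (x - \<mu>)^2) \<partial>lborel)"
    unfolding gauss_def by (subst nn_integral_density) auto
  also have "\<dots> = (\<integral>\<^sup>+x. ennreal (normal_density \<mu> \<sigma> x * (p + q * \<bar>x - \<mu>\<bar> + t * (x - \<mu>) + r * (x - \<mu>)^2)) \<partial>lborel)"
    using nn by (intro nn_integral_cong) (simp add: ennreal_mult)
  also have "\<dots> = ennreal (integral\<^sup>L lborel (\<lambda>x. normal_density \<mu> \<sigma> x * (p + q * \<bar>x - \<mu>\<bar> + t * (x - \<mu>) + r * (x - \<mu>)^2)))"
    using integrable.intros[OF HB] nn by (intro nn_integral_eq_integral) auto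
  also have "\<dots> = ennreal (p + q * (\<sigma> * sqrt (2 / pi)) + r * \<sigma>^2)"
    using HB by (simp add: has_bochner_integral_integral_eq)
  finally show ?thesis .
qed

lemma gauss_integrable_id: "\<sigma> > 0 \<Longrightarrow> integrable (gauss \<mu> \<sigma>) (\<lambda>x. x)"
  unfolding gauss_def
  by (subst integrable_density) (auto intro: integrable_normal_moment_nz_1)

lemma gauss_integral_id: "\<sigma> > 0 \<Longrightarrow> integral\<^sup>L (gauss \<mu> \<sigma>) (\<lambda>x. x) = \<mu>"
  unfolding gauss_def
  by (subst integral_density) (auto simp: integral_normal_moment_nz_1)

abbreviation Mg :: "real \<Rightarrow> real \<Rightarrow> (real \<times> real) measure" where
  "Mg \<mu> \<sigma> \<equiv> gauss \<mu> \<sigma> \<Otimes>\<^sub>M gauss \<mu> \<sigma>"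

lemma pair_sq:
  assumes s: "\<sigma> > 0"
  shows "(\<integral>\<^sup>+y. ennreal ((snd y - fst y)^2) \<partial>Mg \<mu> \<sigma>) = ennreal (2 * \<sigma>^2)"
proof -
  interpret G: prob_space "gauss \<mu> \<sigma>" by (rule prob_gauss[OF s])
  have "(\<integral>\<^sup>+y. ennreal ((snd y - fst y)^2) \<partial>Mg \<mu> \<sigma>)
      = (\<integral>\<^sup>+a. \<integral>\<^sup>+b. ennreal ((b - a)^2) \<partial>gauss \<mu> \<sigma> \<partial>gauss \<mu> \<sigma>)"
    by (subst G.nn_integral_fst[symmetric]) auto
  also have "\<dots> = (\<integral>\<^sup>+a. ennreal ((a - \<mu>)^2 + \<sigma>^2) \<partial>gauss \<mu> \<sigma>)"
  proof (intro nn_integral_cong)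
    fix a
    have "(\<integral>\<^sup>+b. ennreal ((b - a)^2) \<partial>gauss \<mu> \<sigma>)
       = (\<integral>\<^sup>+b. ennreal ((a - \<mu>)^2 + 0 * \<bar>b - \<mu>\<bar> + (-2 * (a - \<mu>)) * (b - \<mu>) + 1 * (b - \<mu>)^2) \<partial>gauss \<mu> \<sigma>)"
      by (intro nn_integral_cong arg_cong[where f=ennreal]) (simp add: power2_eq_square algebra_simps)
    also have "\<dots> = ennreal ((a - \<mu>)^2 + 0 * (\<sigma> * sqrt (2 / pi)) + 1 * \<sigma>^2)"
    proof (rule gauss_nn[OF s])
      fix x
      have "(a - \<mu>)^2 + 0 * \<bar>x - \<mu>\<bar> + (-2 * (a - \<mu>)) * (x - \<mu>) + 1 * (x - \<mu>)^2 = (x - a)^2"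
        by (simp add: power2_eq_square algebra_simps)
      then show "0 \<le> (a - \<mu>)^2 + 0 * \<bar>x - \<mu>\<bar> + (-2 * (a - \<mu>)) * (x - \<mu>) + 1 * (x - \<mu>)^2" by simp
    qed
    finally show "(\<integral>\<^sup>+b. ennreal ((b - a)^2) \<partial>gauss \<mu> \<sigma>) = ennreal ((a - \<mu>)^2 + \<sigma>^2)" by simp
  qed
  also have "\<dots> = (\<integral>\<^sup>+a. ennreal (\<sigma>^2 + 0 * \<bar>a - \<mu>\<bar> + 0 * (a - \<mu>) + 1 * (a - \<mu>)^2) \<partial>gauss \<mu> \<sigma>)"
    by (intro nn_integral_cong arg_cong[where f=ennreal]) simp
  also have "\<dots> = ennreal (\<sigma>^2 + 0 * (\<sigma> * sqrt (2 / pi)) + 1 * \<sigma>^2)"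
    by (rule gauss_nn[OF s]) simp
  finally show ?thesis by simp
qed

lemma pair_abs:
  assumes s: "\<sigma> > 0"
  shows "(\<integral>\<^sup>+y. ennreal (\<bar>snd y - fst y\<bar> * \<bar>fst y + snd y - 2 * \<mu>\<bar>) \<partial>Mg \<mu> \<sigma>) \<ge> ennreal ((2 - 4 / pi) * \<sigma>^2)"
proof -
  interpret G: prob_space "gauss \<mu> \<sigma>" by (rule prob_gauss[OF s])
  define sg where "sg = \<sigma> * sqrt (2 / pi)"
  have sg2: "sg^2 = 2 * \<sigma>^2 / pi" unfolding sg_def by (simp add: power_mult_distrib)
  have "2 * \<sigma>^2 \<le> pi * \<sigma>^2" using pi_gt3 by (intro mult_right_mono) auto
  then have sgle: "sg^2 \<le> \<sigma>^2" unfolding sg2 using pi_gt3 by (simp add: field_simps)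
  have pw: "\<bar>b - a\<bar> * \<bar>a + b - 2 * \<mu>\<bar> \<ge> (\<bar>a - \<mu>\<bar> - \<bar>b - \<mu>\<bar>)^2" for a b :: real
  proof -
    have "\<bar>b - a\<bar> * \<bar>a + b - 2 * \<mu>\<bar> = \<bar>(b - \<mu>)^2 - (a - \<mu>)^2\<bar>"
      by (simp add: power2_eq_square algebra_simps abs_mult[symmetric])
    also have "\<dots> = \<bar>\<bar>b - \<mu>\<bar>^2 - \<bar>a - \<mu>\<bar>^2\<bar>" by simp
    also have "\<dots> = \<bar>\<bar>b - \<mu>\<bar> - \<bar>a - \<mu>\<bar>\<bar> * (\<bar>b - \<mu>\<bar> + \<bar>a - \<mu>\<bar>)"
    proof -
      have e: "u^2 - v^2 = (u - v) * (u + v)" for u v :: real by (simp add: power2_eq_square algebra_simps)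
      show ?thesis unfolding e abs_mult by simp
    qed
    also have "\<dots> \<ge> \<bar>\<bar>b - \<mu>\<bar> - \<bar>a - \<mu>\<bar>\<bar> * \<bar>\<bar>b - \<mu>\<bar> - \<bar>a - \<mu>\<bar>\<bar>"
      by (intro mult_left_mono) auto
    finally show ?thesis by (simp add: power2_eq_square abs_minus_commute)
  qed
  have "(\<integral>\<^sup>+y. ennreal (\<bar>snd y - fst y\<bar> * \<bar>fst y + snd y - 2 * \<mu>\<bar>) \<partial>Mg \<mu> \<sigma>)
      \<ge> (\<integral>\<^sup>+y. ennreal ((\<bar>fst y - \<mu>\<bar> - \<bar>snd y - \<mu>\<bar>)^2) \<partial>Mg \<mu> \<sigma>)"
    by (intro nn_integral_mono ennreal_leI pw)
  moreover have "(\<integral>\<^sup>+y. ennreal ((\<bar>fst y - \<mu>\<bar> - \<bar>snd y - \<mu>\<bar>)^2) \<partial>Mg \<mu> \<sigma>)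
      = (\<integral>\<^sup>+a. \<integral>\<^sup>+b. ennreal ((\<bar>a - \<mu>\<bar> - \<bar>b - \<mu>\<bar>)^2) \<partial>gauss \<mu> \<sigma> \<partial>gauss \<mu> \<sigma>)"
    by (subst G.nn_integral_fst[symmetric]) auto
  moreover have "\<dots> = (\<integral>\<^sup>+a. ennreal (\<sigma>^2 + (- 2 * sg) * \<bar>a - \<mu>\<bar> + 0 * (a - \<mu>) + 1 * (a - \<mu>)^2) \<partial>gauss \<mu> \<sigma>)"
  proof (intro nn_integral_cong)
    fix a
    have "(\<integral>\<^sup>+b. ennreal ((\<bar>a - \<mu>\<bar> - \<bar>b - \<mu>\<bar>)^2) \<partial>gauss \<mu> \<sigma>)
       = (\<integral>\<^sup>+b. ennreal (\<bar>a - \<mu>\<bar>^2 + (-2 * \<bar>a - \<mu>\<bar>) * \<bar>b - \<mu>\<bar> + 0 * (b - \<mu>) + 1 * (b - \<mu>)^2) \<partial>gauss \<mu> \<sigma>)"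
      by (intro nn_integral_cong arg_cong[where f=ennreal]) (simp add: power2_eq_square algebra_simps)
    also have "\<dots> = ennreal (\<bar>a - \<mu>\<bar>^2 + (-2 * \<bar>a - \<mu>\<bar>) * (\<sigma> * sqrt (2 / pi)) + 1 * \<sigma>^2)"
    proof (rule gauss_nn[OF s])
      fix x
      have "\<bar>a - \<mu>\<bar>^2 + (-2 * \<bar>a - \<mu>\<bar>) * \<bar>x - \<mu>\<bar> + 0 * (x - \<mu>) + 1 * (x - \<mu>)^2 = (\<bar>a - \<mu>\<bar> - \<bar>x - \<mu>\<bar>)^2"
        by (simp add: power2_eq_square algebra_simps)
      then show "0 \<le> \<bar>a - \<mu>\<bar>^2 + (-2 * \<bar>a - \<mu>\<bar>) * \<bar>x - \<mu>\<bar> + 0 * (x - \<mu>) + 1 * (x - \<mu>)^2" by simp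
    qed
    also have "\<dots> = ennreal (\<sigma>^2 + (- 2 * sg) * \<bar>a - \<mu>\<bar> + 0 * (a - \<mu>) + 1 * (a - \<mu>)^2)"
      unfolding sg_def by (simp add: algebra_simps)
    finally show "(\<integral>\<^sup>+b. ennreal ((\<bar>a - \<mu>\<bar> - \<bar>b - \<mu>\<bar>)^2) \<partial>gauss \<mu> \<sigma>) = ennreal (\<sigma>^2 + (- 2 * sg) * \<bar>a - \<mu>\<bar> + 0 * (a - \<mu>) + 1 * (a - \<mu>)^2)" .
  qed
  moreover have "\<dots> = ennreal (\<sigma>^2 + (- 2 * sg) * (\<sigma> * sqrt (2 / pi)) + 1 * \<sigma>^2)"
  proof (rule gauss_nn[OF s])
    fix x
    have "\<sigma>^2 + (- 2 * sg) * \<bar>x - \<mu>\<bar> + 0 * (x - \<mu>) + 1 * (x - \<mu>)^2 = (\<bar>x - \<mu>\<bar> - sg)^2 + (\<sigma>^2 - sg^2)"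
      by (simp add: power2_eq_square algebra_simps)
    moreover have "0 \<le> (\<bar>x - \<mu>\<bar> - sg)^2 + (\<sigma>^2 - sg^2)" using sgle by simp
    ultimately show "0 \<le> \<sigma>^2 + (- 2 * sg) * \<bar>x - \<mu>\<bar> + 0 * (x - \<mu>) + 1 * (x - \<mu>)^2" by linarith
  qed
  moreover have "\<sigma>^2 + (- 2 * sg) * (\<sigma> * sqrt (2 / pi)) + 1 * \<sigma>^2 = (2 - 4 / pi) * \<sigma>^2"
  proof -
    have "\<sigma>^2 + (- 2 * sg) * (\<sigma> * sqrt (2 / pi)) + 1 * \<sigma>^2 = 2 * \<sigma>^2 - 2 * sg^2"
      unfolding sg_def[symmetric] by (simp add: power2_eq_square)
    also have "\<dots> = (2 - 4 / pi) * \<sigma>^2" unfolding sg2 by (simp add: algebra_simps)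
    finally show ?thesis .
  qed
  ultimately show ?thesis by simp
qed

lemma Mg_prob: "\<sigma> > 0 \<Longrightarrow> prob_space (Mg \<mu> \<sigma>)"
  by (intro prob_space_pair prob_gauss)

lemma Mg_fst:
  assumes s: "\<sigma> > 0"
  shows "integrable (Mg \<mu> \<sigma>) fst" "integral\<^sup>L (Mg \<mu> \<sigma>) fst = \<mu>"
proof -
  interpret G: prob_space "gauss \<mu> \<sigma>" by (rule prob_gauss[OF s])
  have d: "distr (Mg \<mu> \<sigma>) (gauss \<mu> \<sigma>) fst = gauss \<mu> \<sigma>" by (rule G.distr_pair_fst)
  have "integrable (distr (Mg \<mu> \<sigma>) (gauss \<mu> \<sigma>) fst) (\<lambda>x. x)"
    unfolding d by (rule gauss_integrable_id[OF s])
  then show "integrable (Mg \<mu> \<sigma>) fst"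
    by (subst (asm) integrable_distr_eq) auto
  have "integral\<^sup>L (distr (Mg \<mu> \<sigma>) (gauss \<mu> \<sigma>) fst) (\<lambda>x. x) = \<mu>"
    unfolding d by (rule gauss_integral_id[OF s])
  then show "integral\<^sup>L (Mg \<mu> \<sigma>) fst = \<mu>"
    by (subst (asm) integral_distr) auto
qed

lemma Mg_snd:
  assumes s: "\<sigma> > 0"
  shows "integrable (Mg \<mu> \<sigma>) snd" "integral\<^sup>L (Mg \<mu> \<sigma>) snd = \<mu>"
proof -
  interpret G: prob_space "gauss \<mu> \<sigma>" by (rule prob_gauss[OF s])
  interpret GG: pair_sigma_finite "gauss \<mu> \<sigma>" "gauss \<mu> \<sigma>" ..
  have d: "Mg \<mu> \<sigma> = distr (Mg \<mu> \<sigma>) (Mg \<mu> \<sigma>) (\<lambda>(x, y). (y, x))" by (rule GG.distr_pair_swap)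
  have "integrable (distr (Mg \<mu> \<sigma>) (Mg \<mu> \<sigma>) (\<lambda>(x, y). (y, x))) snd"
    using Mg_fst(1)[OF s] by (subst integrable_distr_eq) (auto simp: case_prod_beta)
  then show "integrable (Mg \<mu> \<sigma>) snd" using d by simp
  have "integral\<^sup>L (distr (Mg \<mu> \<sigma>) (Mg \<mu> \<sigma>) (\<lambda>(x, y). (y, x))) snd = \<mu>"
    using Mg_fst(2)[OF s] by (subst integral_distr) (auto simp: case_prod_beta)
  then show "integral\<^sup>L (Mg \<mu> \<sigma>) snd = \<mu>" using d by simp
qed

lemma T_int:
  assumes s: "\<sigma> > 0"
  shows "integrable (PiM I (\<lambda>_. Mg \<mu> \<sigma>)) (\<lambda>x. \<Sum>j\<in>I. fst (x j) + snd (x j))"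
    "integral\<^sup>L (PiM I (\<lambda>_. Mg \<mu> \<sigma>)) (\<lambda>x. \<Sum>j\<in>I. fst (x j) + snd (x j)) = 2 * \<mu> * card I"
proof -
  have ip: "integrable (Mg \<mu> \<sigma>) (\<lambda>y. fst y + snd y)"
    using Mg_fst(1)[OF s] Mg_snd(1)[OF s] by (intro Bochner_Integration.integrable_add) auto
  have vp: "integral\<^sup>L (Mg \<mu> \<sigma>) (\<lambda>y. fst y + snd y) = 2 * \<mu>"
    using Mg_fst[OF s] Mg_snd[OF s] by (subst Bochner_Integration.integral_add) auto
  have d: "distr (PiM I (\<lambda>_. Mg \<mu> \<sigma>)) (Mg \<mu> \<sigma>) (\<lambda>\<omega>. \<omega> j) = Mg \<mu> \<sigma>" if "j \<in> I" for j
    using that Mg_prob[OF s] by (intro distr_PiM_component) auto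
  have ij: "integrable (PiM I (\<lambda>_. Mg \<mu> \<sigma>)) (\<lambda>x. fst (x j) + snd (x j))" if j: "j \<in> I" for j
  proof -
    have "integrable (distr (PiM I (\<lambda>_. Mg \<mu> \<sigma>)) (Mg \<mu> \<sigma>) (\<lambda>\<omega>. \<omega> j)) (\<lambda>y. fst y + snd y)"
      unfolding d[OF j] by (rule ip)
    then show ?thesis using j by (subst (asm) integrable_distr_eq) auto
  qed
  have vj: "integral\<^sup>L (PiM I (\<lambda>_. Mg \<mu> \<sigma>)) (\<lambda>x. fst (x j) + snd (x j)) = 2 * \<mu>" if j: "j \<in> I" for j
  proof -
    have "integral\<^sup>L (distr (PiM I (\<lambda>_. Mg \<mu> \<sigma>)) (Mg \<mu> \<sigma>) (\<lambda>\<omega>. \<omega> j)) (\<lambda>y. fst y + snd y) = 2 * \<mu>"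
      unfolding d[OF j] by (rule vp)
    then show ?thesis using j by (subst (asm) integral_distr) auto
  qed
  show "integrable (PiM I (\<lambda>_. Mg \<mu> \<sigma>)) (\<lambda>x. \<Sum>j\<in>I. fst (x j) + snd (x j))"
    using ij by (intro Bochner_Integration.integrable_sum) auto
  show "integral\<^sup>L (PiM I (\<lambda>_. Mg \<mu> \<sigma>)) (\<lambda>x. \<Sum>j\<in>I. fst (x j) + snd (x j)) = 2 * \<mu> * card I"
    using ij vj by (subst Bochner_Integration.integral_sum) auto
qed

lemma PS_Mg: "\<sigma> > 0 \<Longrightarrow> product_sigma_finite (\<lambda>_::nat. Mg \<mu> \<sigma>)"
  by (simp add: product_sigma_finite_def prob_space_imp_sigma_finite Mg_prob)

lemma meas_Xw: "i \<in> {1..n} \<Longrightarrow> (\<lambda>z. ennreal \<bar>Xi z i (wbar n z)\<bar>) \<in> borel_measurable (PiM {1..n} (\<lambda>_. Mg \<mu> \<sigma>))"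
  unfolding Xi_def wbar_def by measurable

lemma main_int:
  assumes s: "\<sigma> > 0" and n: "n \<ge> 2" and i: "i \<in> {1..n}"
  shows "(\<integral>\<^sup>+z. ennreal \<bar>Xi z i (wbar n z)\<bar> \<partial>supersample n \<mu> \<sigma>) \<ge> ennreal ((1 - 1/n) * ((2 - 4/pi) * \<sigma>^2))"
proof -
  define I where "I = {1..n} - {i}"
  have fI: "finite I" and iI: "i \<notin> I" and ins: "insert i I = {1..n}" using i by (auto simp: I_def)
  have cI: "card I = n - 1" using i by (simp add: I_def)
  interpret PS: product_sigma_finite "\<lambda>_::nat. Mg \<mu> \<sigma>" by (rule PS_Mg[OF s])
  interpret PI: prob_space "PiM I (\<lambda>_::nat. Mg \<mu> \<sigma>)" by (rule prob_space_PiM) (rule Mg_prob[OF s])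
  have meas: "(\<lambda>z. ennreal \<bar>Xi z i (wbar n z)\<bar>) \<in> borel_measurable (PiM (insert i I) (\<lambda>_. Mg \<mu> \<sigma>))"
    unfolding ins by (rule meas_Xw[OF i])
  define T where "T x = (\<Sum>j\<in>I. fst (x j) + snd (x j))" for x :: "nat \<Rightarrow> real \<times> real"
  define m where "m = 2 * \<mu> * (real n - 1)"
  have nn: "real n > 0" using n by simp
  have inner: "ennreal ((1 - 1/n) * (\<bar>snd y - fst y\<bar> * \<bar>fst y + snd y - 2 * \<mu>\<bar>))
      \<le> (\<integral>\<^sup>+x. ennreal \<bar>Xi (x(i := y)) i (wbar n (x(i := y)))\<bar> \<partial>PiM I (\<lambda>_. Mg \<mu> \<sigma>))" for y
  proof -
    define d where "d = snd y - fst y"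
    define c where "c = - ((real n - 1) / n) * (fst y + snd y - 2 * \<mu>)"
    have eq: "Xi (x(i := y)) i (wbar n (x(i := y))) = d * (c + (T x - m) / n)" for x
    proof -
      have "(\<Sum>j=1..n. fst ((x(i := y)) j) + snd ((x(i := y)) j)) = (fst y + snd y) + T x"
        unfolding ins[symmetric] T_def using fI iI by (simp add: sum.insert, intro sum.cong) auto
      then show ?thesis
        unfolding Xi_def wbar_def d_def c_def m_def using nn
        by (simp add: field_simps)
    qed
    have intT: "integrable (PiM I (\<lambda>_. Mg \<mu> \<sigma>)) T" and valT: "integral\<^sup>L (PiM I (\<lambda>_. Mg \<mu> \<sigma>)) T = m"
      unfolding T_def m_def using T_int[OF s, of I] cI n by (auto simp: of_nat_diff)
    have HBc: "has_bochner_integral (PiM I (\<lambda>_. Mg \<mu> \<sigma>)) (\<lambda>x. a) a" for a :: real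
    proof -
      have "has_bochner_integral (PiM I (\<lambda>_. Mg \<mu> \<sigma>)) (\<lambda>x. a) (integral\<^sup>L (PiM I (\<lambda>_. Mg \<mu> \<sigma>)) (\<lambda>x. a))"
        by (rule has_bochner_integral_integrable) simp
      then show ?thesis by (simp add: PI.prob_space)
    qed
    have HB: "has_bochner_integral (PiM I (\<lambda>_. Mg \<mu> \<sigma>)) (\<lambda>x. d * (c + (T x - m) / n)) (d * (c + (m - m) / n))"
    proof -
      have h1: "has_bochner_integral (PiM I (\<lambda>_. Mg \<mu> \<sigma>)) T m"
        using has_bochner_integral_integrable[OF intT] valT by simp
      have h2: "has_bochner_integral (PiM I (\<lambda>_. Mg \<mu> \<sigma>)) (\<lambda>x. c + (T x - m) / n) (c + (m - m) / n)"
      proof -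
        have "has_bochner_integral (PiM I (\<lambda>_. Mg \<mu> \<sigma>)) (\<lambda>x. c) c"
          by (rule HBc)
        moreover have "has_bochner_integral (PiM I (\<lambda>_. Mg \<mu> \<sigma>)) (\<lambda>x. (T x - m) / n) ((m - m) / n)"
          by (intro has_bochner_integral_divide_zero has_bochner_integral_diff h1 HBc)
        ultimately show ?thesis by (rule has_bochner_integral_add)
      qed
      then show ?thesis by (rule has_bochner_integral_mult_right)
    qed
    have "ennreal ((1 - 1/n) * (\<bar>snd y - fst y\<bar> * \<bar>fst y + snd y - 2 * \<mu>\<bar>)) = ennreal (norm (d * (c + (m - m) / n)))"
    proof -
      have a: "\<bar>(real n - 1) / n\<bar> = 1 - 1/n" using n nn by (simp add: field_simps)
      have "norm (d * (c + (m - m) / n)) = (1 - 1/n) * (\<bar>snd y - fst y\<bar> * \<bar>fst y + snd y - 2 * \<mu>\<bar>)"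
      proof -
        have a': "\<bar>real n - 1\<bar> = real n - 1" using n by simp
        have ca: "\<bar>c\<bar> = ((real n - 1) / n) * \<bar>fst y + snd y - 2 * \<mu>\<bar>"
          unfolding c_def using nn by (simp add: abs_mult a')
        have "norm (d * (c + (m - m) / n)) = \<bar>d\<bar> * \<bar>c\<bar>" by (simp add: abs_mult)
        also have "\<dots> = (1 - 1/n) * (\<bar>d\<bar> * \<bar>fst y + snd y - 2 * \<mu>\<bar>)"
          unfolding ca using nn by (simp add: field_simps)
        finally show ?thesis unfolding d_def .
      qed
      then show ?thesis by simp
    qed
    also have "\<dots> = ennreal (norm (integral\<^sup>L (PiM I (\<lambda>_. Mg \<mu> \<sigma>)) (\<lambda>x. d * (c + (T x - m) / n))))"
      by (simp only: has_bochner_integral_integral_eq[OF HB])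
    also have "\<dots> \<le> (\<integral>\<^sup>+x. norm (d * (c + (T x - m) / n)) \<partial>PiM I (\<lambda>_. Mg \<mu> \<sigma>))"
      by (rule integral_norm_bound_ennreal[OF integrable.intros[OF HB]])
    also have "\<dots> = (\<integral>\<^sup>+x. ennreal \<bar>Xi (x(i := y)) i (wbar n (x(i := y)))\<bar> \<partial>PiM I (\<lambda>_. Mg \<mu> \<sigma>))"
      unfolding eq by simp
    finally show ?thesis .
  qed
  have p1: "0 \<le> 1 - 1/real n" using n by (simp add: field_simps)
  have "4 / pi \<le> 2" using pi_gt3 by (simp add: field_simps)
  then have p2: "0 \<le> (2 - 4/pi) * \<sigma>^2" by simp
  have "ennreal ((1 - 1/n) * ((2 - 4/pi) * \<sigma>^2)) = ennreal (1 - 1/n) * ennreal ((2 - 4 / pi) * \<sigma>^2)"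
    by (rule ennreal_mult[OF p1 p2])
  also have "\<dots> \<le> ennreal (1 - 1/n) * (\<integral>\<^sup>+y. ennreal (\<bar>snd y - fst y\<bar> * \<bar>fst y + snd y - 2 * \<mu>\<bar>) \<partial>Mg \<mu> \<sigma>)"
    by (intro mult_left_mono pair_abs[OF s]) auto
  also have "\<dots> = (\<integral>\<^sup>+y. ennreal ((1 - 1/n) * (\<bar>snd y - fst y\<bar> * \<bar>fst y + snd y - 2 * \<mu>\<bar>)) \<partial>Mg \<mu> \<sigma>)"
    using n by (subst nn_integral_cmult[symmetric]) (auto simp: ennreal_mult)
  also have "\<dots> \<le> (\<integral>\<^sup>+y. \<integral>\<^sup>+x. ennreal \<bar>Xi (x(i := y)) i (wbar n (x(i := y)))\<bar> \<partial>PiM I (\<lambda>_. Mg \<mu> \<sigma>) \<partial>Mg \<mu> \<sigma>)"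
    by (intro nn_integral_mono inner)
  also have "\<dots> = (\<integral>\<^sup>+z. ennreal \<bar>Xi z i (wbar n z)\<bar> \<partial>supersample n \<mu> \<sigma>)"
    unfolding supersample_def ins[symmetric] by (rule PS.product_nn_integral_insert_rev[OF fI iI meas, symmetric])
  finally show ?thesis .
qed

lemma gauss_point: "emeasure (gauss \<mu> \<sigma>) {c} = 0"
proof -
  have "emeasure (gauss \<mu> \<sigma>) {c} = (\<integral>\<^sup>+x. ennreal (normal_density \<mu> \<sigma> x) * indicator {c} x \<partial>lborel)"
    unfolding gauss_def by (subst emeasure_density) auto
  also have "\<dots> = (\<integral>\<^sup>+x. ennreal (normal_density \<mu> \<sigma> c) * indicator {c} x \<partial>lborel)"
    by (intro nn_integral_cong) (auto split: split_indicator)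
  also have "\<dots> = 0" by (simp add: nn_integral_cmult)
  finally show ?thesis .
qed

lemma Mg_line:
  assumes s: "\<sigma> > 0"
  shows "emeasure (Mg \<mu> \<sigma>) {y \<in> space (Mg \<mu> \<sigma>). snd y - fst y = t} = 0"
proof -
  interpret G: prob_space "gauss \<mu> \<sigma>" by (rule prob_gauss[OF s])
  have S: "{y \<in> space (Mg \<mu> \<sigma>). snd y - fst y = t} \<in> sets (Mg \<mu> \<sigma>)" by measurable
  have "emeasure (Mg \<mu> \<sigma>) {y \<in> space (Mg \<mu> \<sigma>). snd y - fst y = t}
      = (\<integral>\<^sup>+y. indicator {y \<in> space (Mg \<mu> \<sigma>). snd y - fst y = t} y \<partial>Mg \<mu> \<sigma>)"
    using S by simp
  also have "\<dots> = (\<integral>\<^sup>+a. \<integral>\<^sup>+b. indicator {y \<in> space (Mg \<mu> \<sigma>). snd y - fst y = t} (a, b) \<partial>gauss \<mu> \<sigma> \<partial>gauss \<mu> \<sigma>)"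
    using S by (subst G.nn_integral_fst[symmetric]) auto
  also have "\<dots> = (\<integral>\<^sup>+a. emeasure (gauss \<mu> \<sigma>) {a + t} \<partial>gauss \<mu> \<sigma>)"
  proof (intro nn_integral_cong)
    fix a
    have "(\<integral>\<^sup>+b. indicator {y \<in> space (Mg \<mu> \<sigma>). snd y - fst y = t} (a, b) \<partial>gauss \<mu> \<sigma>)
        = (\<integral>\<^sup>+b. indicator {a + t} b \<partial>gauss \<mu> \<sigma>)"
      by (intro nn_integral_cong) (auto simp: space_pair_measure split: split_indicator)
    then show "(\<integral>\<^sup>+b. indicator {y \<in> space (Mg \<mu> \<sigma>). snd y - fst y = t} (a, b) \<partial>gauss \<mu> \<sigma>) = emeasure (gauss \<mu> \<sigma>) {a + t}"
      by simp
  qed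
  also have "\<dots> = 0" by (simp add: gauss_point)
  finally show ?thesis .
qed

lemma sel_diff: "r = -1 \<or> r = 1 \<Longrightarrow> r' = -1 \<or> r' = 1 \<Longrightarrow> r \<noteq> r' \<Longrightarrow> sel p r - sel p r' = r * (snd p - fst p)"
  by (auto simp: sel_def)

lemma ae_neq:
  assumes s: "\<sigma> > 0" and r: "r \<in> PP n" and r': "r' \<in> PP n" and ne: "r \<noteq> r'"
  shows "AE z in supersample n \<mu> \<sigma>. Wout n z r \<noteq> Wout n z r'"
proof -
  obtain i where i: "i \<in> {1..n}" and nei: "r i \<noteq> r' i"
    using ne r r' unfolding PP_def by (metis PiE_ext)
  define I where "I = {1..n} - {i}"
  have fI: "finite I" and iI: "i \<notin> I" and ins: "insert i I = {1..n}" using i by (auto simp: I_def)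
  have n1: "real n > 0" using i by simp
  have ri: "r i = -1 \<or> r i = 1" and ri': "r' i = -1 \<or> r' i = 1" using PP_val i r r' by blast+
  interpret PS: product_sigma_finite "\<lambda>_::nat. Mg \<mu> \<sigma>" by (rule PS_Mg[OF s])
  define Bad where "Bad = {z \<in> space (supersample n \<mu> \<sigma>). (\<Sum>j=1..n. sel (z j) (r j)) = (\<Sum>j=1..n. sel (z j) (r' j))}"
  have Bad_sets: "Bad \<in> sets (supersample n \<mu> \<sigma>)"
    unfolding Bad_def supersample_def sel_def by measurable
  define k where "k x = (\<Sum>j\<in>I. sel (x j) (r j) - sel (x j) (r' j))" for x :: "nat \<Rightarrow> real \<times> real"
  have ptw: "indicator Bad (x(i := y)) \<le> (indicator {y \<in> space (Mg \<mu> \<sigma>). snd y - fst y = - r i * k x} y :: ennreal)" for x y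
  proof (cases "x(i := y) \<in> Bad")
    case True
    then have "(\<Sum>j=1..n. sel ((x(i := y)) j) (r j)) - (\<Sum>j=1..n. sel ((x(i := y)) j) (r' j)) = 0"
      unfolding Bad_def by simp
    also have "(\<Sum>j=1..n. sel ((x(i := y)) j) (r j)) - (\<Sum>j=1..n. sel ((x(i := y)) j) (r' j))
        = (\<Sum>j\<in>insert i I. sel ((x(i := y)) j) (r j) - sel ((x(i := y)) j) (r' j))"
      unfolding ins sum_subtractf ..
    also have "\<dots> = (sel y (r i) - sel y (r' i)) + k x"
      unfolding k_def using fI iI by (simp add: sum.insert, intro sum.cong) auto
    also have "sel y (r i) - sel y (r' i) = r i * (snd y - fst y)"
      by (rule sel_diff[OF ri ri' nei])
    finally have "r i * (snd y - fst y) = - k x" by simp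
    then have "r i * (r i * (snd y - fst y)) = - r i * k x" by simp
    moreover have "r i * r i = 1" using ri by auto
    ultimately have "snd y - fst y = - r i * k x" by (simp add: mult.assoc[symmetric])
    then show ?thesis using True by (simp add: space_pair_measure)
  qed simp
  have meas: "indicator Bad \<in> borel_measurable (PiM (insert i I) (\<lambda>_. Mg \<mu> \<sigma>))"
    using Bad_sets unfolding ins supersample_def by simp
  have "emeasure (supersample n \<mu> \<sigma>) Bad = (\<integral>\<^sup>+z. indicator Bad z \<partial>supersample n \<mu> \<sigma>)"
    using Bad_sets by simp
  also have "\<dots> = (\<integral>\<^sup>+x. \<integral>\<^sup>+y. indicator Bad (x(i := y)) \<partial>Mg \<mu> \<sigma> \<partial>PiM I (\<lambda>_. Mg \<mu> \<sigma>))"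
    unfolding supersample_def ins[symmetric] by (rule PS.product_nn_integral_insert[OF fI iI meas])
  also have "\<dots> \<le> (\<integral>\<^sup>+x. \<integral>\<^sup>+y. indicator {y \<in> space (Mg \<mu> \<sigma>). snd y - fst y = - r i * k x} y \<partial>Mg \<mu> \<sigma> \<partial>PiM I (\<lambda>_. Mg \<mu> \<sigma>))"
    by (intro nn_integral_mono ptw)
  also have "\<dots> = 0"
  proof -
    have "(\<integral>\<^sup>+y. indicator {y \<in> space (Mg \<mu> \<sigma>). snd y - fst y = - r i * k x} y \<partial>Mg \<mu> \<sigma>) = 0" for x
    proof -
      have S: "{y \<in> space (Mg \<mu> \<sigma>). snd y - fst y = - r i * k x} \<in> sets (Mg \<mu> \<sigma>)" by measurable
      show ?thesis using S Mg_line[OF s, of \<mu> "- r i * k x"] by simp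
    qed
    then show ?thesis by simp
  qed
  finally have "emeasure (supersample n \<mu> \<sigma>) Bad = 0" by simp
  then have null: "Bad \<in> null_sets (supersample n \<mu> \<sigma>)" using Bad_sets by (intro null_setsI)
  show ?thesis
  proof (rule AE_I'[OF null], rule subsetI)
    fix z assume "z \<in> {z \<in> space (supersample n \<mu> \<sigma>). \<not> Wout n z r \<noteq> Wout n z r'}"
    then have z: "z \<in> space (supersample n \<mu> \<sigma>)" and eq: "Wout n z r = Wout n z r'" by auto
    from eq have "(\<Sum>j=1..n. sel (z j) (r j)) = (\<Sum>j=1..n. sel (z j) (r' j))"
      unfolding Wout_def using n1 by (simp add: divide_cancel_right)
    then show "z \<in> Bad" unfolding Bad_def using z by simp
  qed
qed

lemma ae_inj:
  assumes s: "\<sigma> > 0"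
  shows "AE z in supersample n \<mu> \<sigma>. inj_on (Wout n z) (PP n)"
proof -
  have "AE z in supersample n \<mu> \<sigma>. \<forall>r\<in>PP n. \<forall>r'\<in>PP n. r \<noteq> r' \<longrightarrow> Wout n z r \<noteq> Wout n z r'"
  proof (intro eventually_ball_finite finite_PP ballI)
    fix r r' assume r: "r \<in> PP n" and r': "r' \<in> PP n"
    show "AE z in supersample n \<mu> \<sigma>. r \<noteq> r' \<longrightarrow> Wout n z r \<noteq> Wout n z r'"
    proof (cases "r = r'")
      case False
      with ae_neq[OF s r r' False] show ?thesis by (auto elim: AE_mp)
    qed simp
  qed
  then show ?thesis by eventually_elim (auto intro!: inj_onI)
qed

lemma Gi_nonneg: "Gi n z i \<ge> 0"
  unfolding Gi_def by (intro divide_nonneg_nonneg sum_nonneg) auto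

lemma Gf_eq: "Gf n z = (\<Sum>i=1..n. Gi n z i) / n"
proof -
  have "(\<Sum>r'\<in>PP n. (\<Sum>i=1..n. \<bar>Xi z i (Wout n z r')\<bar>) / n) = (\<Sum>r'\<in>PP n. \<Sum>i=1..n. \<bar>Xi z i (Wout n z r')\<bar>) / n"
    by (simp only: sum_divide_distrib)
  also have "\<dots> = (\<Sum>i=1..n. \<Sum>r'\<in>PP n. \<bar>Xi z i (Wout n z r')\<bar>) / n"
    by (subst sum.swap) (rule refl)
  finally have a: "(\<Sum>r'\<in>PP n. (\<Sum>i=1..n. \<bar>Xi z i (Wout n z r')\<bar>) / n) = (\<Sum>i=1..n. \<Sum>r'\<in>PP n. \<bar>Xi z i (Wout n z r')\<bar>) / n" .
  have b: "(\<Sum>i=1..n. (\<Sum>r'\<in>PP n. \<bar>Xi z i (Wout n z r')\<bar>) / card (PP n)) = (\<Sum>i=1..n. \<Sum>r'\<in>PP n. \<bar>Xi z i (Wout n z r')\<bar>) / card (PP n)"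
    by (simp only: sum_divide_distrib)
  show ?thesis unfolding Gf_def Gi_def a b by simp
qed

lemma Gi_ge:
  assumes n: "n \<ge> 1"
  shows "Gi n z i \<ge> \<bar>Xi z i (wbar n z)\<bar>"
proof -
  define N where "N = real (card (PP n))"
  have N0: "N > 0" unfolding N_def by (simp add: card_gt_0_iff)
  have "(\<Sum>r'\<in>PP n. Xi z i (Wout n z r')) = N * Xi z i (wbar n z)"
  proof -
    have "(\<Sum>r'\<in>PP n. Xi z i (Wout n z r')) =
        (snd (z i) - fst (z i)) * (2 * (\<Sum>r'\<in>PP n. Wout n z r') - N * (fst (z i) + snd (z i)))"
      unfolding Xi_def N_def by (simp add: sum_distrib_left[symmetric] sum_subtractf sum.distrib algebra_simps)
    also have "\<dots> = N * Xi z i (wbar n z)"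
      unfolding sum_Wout[OF n] Xi_def N_def by (simp add: algebra_simps)
    finally show ?thesis .
  qed
  then have "\<bar>Xi z i (wbar n z)\<bar> = \<bar>\<Sum>r'\<in>PP n. Xi z i (Wout n z r')\<bar> / N"
    using N0 by (simp add: abs_mult)
  also have "\<dots> \<le> (\<Sum>r'\<in>PP n. \<bar>Xi z i (Wout n z r')\<bar>) / N"
    using N0 by (intro divide_right_mono sum_abs) auto
  finally show ?thesis unfolding Gi_def N_def .
qed

lemma Gi_n1: "Gi 1 z 1 = (snd (z 1) - fst (z 1))^2"
proof -
  have "\<bar>Xi z 1 (Wout 1 z r')\<bar> = (snd (z 1) - fst (z 1))^2" if r': "r' \<in> PP 1" for r'
  proof -
    have W: "Wout 1 z r' = sel (z 1) (r' 1)" by (simp add: Wout_def)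
    have "r' 1 = -1 \<or> r' 1 = 1" using PP_val[OF r'] by simp
    then show ?thesis
    proof
      assume h: "r' 1 = -1"
      have "Xi z 1 (Wout 1 z r') = -((snd (z 1) - fst (z 1))^2)"
        unfolding W Xi_def sel_def using h by (simp add: power2_eq_square algebra_simps)
      then show ?thesis by simp
    next
      assume h: "r' 1 = 1"
      have "Xi z 1 (Wout 1 z r') = (snd (z 1) - fst (z 1))^2"
        unfolding W Xi_def sel_def using h by (simp add: power2_eq_square algebra_simps)
      then show ?thesis by simp
    qed
  qed
  then have "Gi 1 z 1 = (\<Sum>r'\<in>PP 1. (snd (z 1) - fst (z 1))^2) / card (PP 1)"
    unfolding Gi_def by (intro arg_cong[where f="\<lambda>x. x / _"] sum.cong) auto
  also have "\<dots> = (snd (z 1) - fst (z 1))^2" by (simp add: card_gt_0_iff)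
  finally show ?thesis .
qed

lemma meas_Gi: "i \<in> {1..n} \<Longrightarrow> (\<lambda>z. ennreal (Gi n z i)) \<in> borel_measurable (supersample n \<mu> \<sigma>)"
  unfolding Gi_def Xi_def Wout_def sel_def supersample_def by measurable

lemma K_le: "\<sigma>^2 / (pi * sqrt (log 2 (exp 1))) \<le> \<sigma>^2 / pi"
proof -
  have "exp 1 \<ge> (2::real)" using exp_ge_add_one_self[of 1] by simp
  then have l2: "ln 2 \<le> (1::real)" using ln_mono[of 2 "exp 1"] by simp
  have "log 2 (exp 1) = 1 / ln 2" by (simp add: log_def)
  also have "\<dots> \<ge> 1" using l2 by simp
  finally have "sqrt (log 2 (exp 1)) \<ge> 1" by simp
  then have "pi \<le> pi * sqrt (log 2 (exp 1))" by simp
  then show ?thesis by (intro divide_left_mono) (auto intro: mult_pos_pos)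
qed

lemma int_Gi:
  assumes s: "\<sigma> > 0" and n: "n \<ge> 1" and i: "i \<in> {1..n}"
  shows "(\<integral>\<^sup>+z. ennreal (Gi n z i) \<partial>supersample n \<mu> \<sigma>) \<ge> ennreal (\<sigma>^2 / (pi * sqrt (log 2 (exp 1))))"
proof (cases "n = 1")
  case True
  then have i1: "i = 1" using i by simp
  interpret PS: product_sigma_finite "\<lambda>_::nat. Mg \<mu> \<sigma>" by (rule PS_Mg[OF s])
  have "(\<integral>\<^sup>+z. ennreal (Gi n z i) \<partial>supersample n \<mu> \<sigma>) = (\<integral>\<^sup>+z. ennreal ((snd (z 1) - fst (z 1))^2) \<partial>PiM {1::nat} (\<lambda>_. Mg \<mu> \<sigma>))"
  proof -
    have "(\<integral>\<^sup>+z. ennreal (Gi n z i) \<partial>supersample n \<mu> \<sigma>) = (\<integral>\<^sup>+z. ennreal ((snd (z 1) - fst (z 1))^2) \<partial>supersample n \<mu> \<sigma>)"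
      using True i1 Gi_n1 by simp
    moreover have "supersample n \<mu> \<sigma> = PiM {1::nat} (\<lambda>_. Mg \<mu> \<sigma>)" unfolding supersample_def True by simp
    ultimately show ?thesis by simp
  qed
  also have "\<dots> = (\<integral>\<^sup>+y. ennreal ((snd y - fst y)^2) \<partial>Mg \<mu> \<sigma>)"
    by (rule PS.product_nn_integral_singleton[where f="\<lambda>y. ennreal ((snd y - fst y)^2)"]) measurable
  also have "\<dots> = ennreal (2 * \<sigma>^2)" by (rule pair_sq[OF s])
  finally have e: "(\<integral>\<^sup>+z. ennreal (Gi n z i) \<partial>supersample n \<mu> \<sigma>) = ennreal (2 * \<sigma>^2)" .
  have "\<sigma>^2 / (pi * sqrt (log 2 (exp 1))) \<le> 2 * \<sigma>^2"
  proof -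
    have "\<sigma>^2 \<le> pi * \<sigma>^2" using pi_gt3 by (intro mult_right_mono[of 1 pi, simplified]) auto
    then have "\<sigma>^2 / pi \<le> \<sigma>^2" using pi_gt3 by (simp add: field_simps)
    then show ?thesis using K_le[of \<sigma>] by (smt (verit) zero_le_power2)
  qed
  then show ?thesis unfolding e by (rule ennreal_leI)
next
  case False
  then have n2: "n \<ge> 2" using n by simp
  have "\<sigma>^2 / (pi * sqrt (log 2 (exp 1))) \<le> (1 - 1/n) * ((2 - 4/pi) * \<sigma>^2)"
  proof -
    have a: "\<sigma>^2 / pi \<le> (1/2) * ((2 - 4/pi) * \<sigma>^2)"
    proof -
      have "\<sigma>^2 \<le> (pi - 2) * \<sigma>^2" using mult_right_mono[of 1 "pi - 2" "\<sigma>^2"] pi_gt3 by simp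
      then show ?thesis using pi_gt3 by (simp add: field_simps)
    qed
    have "1/2 \<le> 1 - 1/real n" using n2 by (simp add: field_simps)
    moreover have "0 \<le> (2 - 4/pi) * \<sigma>^2"
    proof -
      have "4 / pi \<le> 2" using pi_gt3 by (simp add: field_simps)
      then show ?thesis by simp
    qed
    ultimately have "(1/2) * ((2 - 4/pi) * \<sigma>^2) \<le> (1 - 1/n) * ((2 - 4/pi) * \<sigma>^2)"
      by (intro mult_right_mono)
    then show ?thesis using a K_le[of \<sigma>] by linarith
  qed
  then have "ennreal (\<sigma>^2 / (pi * sqrt (log 2 (exp 1)))) \<le> ennreal ((1 - 1/n) * ((2 - 4/pi) * \<sigma>^2))"
    by (rule ennreal_leI)
  also have "\<dots> \<le> (\<integral>\<^sup>+z. ennreal \<bar>Xi z i (wbar n z)\<bar> \<partial>supersample n \<mu> \<sigma>)"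
    by (rule main_int[OF s n2 i])
  also have "\<dots> \<le> (\<integral>\<^sup>+z. ennreal (Gi n z i) \<partial>supersample n \<mu> \<sigma>)"
    by (intro nn_integral_mono ennreal_leI Gi_ge n)
  finally show ?thesis .
qed

lemma avg_K:
  assumes n: "n \<ge> 1" and a: "\<And>i. i \<in> {1..n} \<Longrightarrow> ennreal K \<le> a i"
  shows "ennreal K \<le> ennreal (1 / real n) * (\<Sum>i=1..n. a i)"
proof -
  have "ennreal (1 / real n) * (\<Sum>i=1..n. ennreal K) = ennreal (1 / real n) * (ennreal (real n) * ennreal K)"
    by (simp add: ennreal_of_nat_eq_real_of_nat)
  also have "\<dots> = ennreal (1 / real n * real n) * ennreal K"
  proof -
    have "ennreal (1 / real n) * ennreal (real n) = ennreal (1 / real n * real n)"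
      by (rule ennreal_mult[symmetric]) auto
    then show ?thesis by (simp only: mult.assoc[symmetric])
  qed
  also have "\<dots> = ennreal K" using n by simp
  finally have e: "ennreal (1 / real n) * (\<Sum>i=1..n. ennreal K) = ennreal K" .
  have "ennreal (1 / real n) * (\<Sum>i=1..n. ennreal K) \<le> ennreal (1 / real n) * (\<Sum>i=1..n. a i)"
    by (intro mult_left_mono sum_mono a) auto
  then show ?thesis unfolding e .
qed

theorem proposition1:
  fixes n :: nat and \<mu> \<sigma> :: real
  assumes "n \<ge> 1" and "\<sigma> > 0"
  shows "((\<integral>\<^sup>+ z. ennreal (cgf_star_inv
              (map_pmf (\<lambda>(r, w). Etil n z r w) (decoupled n z))
              (mutual_info_pmf (map_pmf (\<lambda>r. (Wout n z r, r)) (Rdist n))))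
            \<partial>supersample n \<mu> \<sigma>)
         \<ge> ennreal (\<sigma>^2 / (pi * sqrt (log 2 (exp 1))))) \<and>
         (ennreal (1 / real n) *
           (\<Sum>i=1..n. \<integral>\<^sup>+ z. ennreal (cgf_star_inv
              (map_pmf (\<lambda>(r, w). Etil_i z i r w) (decoupled n z))
              (mutual_info_pmf (map_pmf (\<lambda>r. (Wout n z r, r i)) (Rdist n))))
            \<partial>supersample n \<mu> \<sigma>)
         \<ge> ennreal (\<sigma>^2 / (pi * sqrt (log 2 (exp 1)))))"
proof -
  have n: "n \<ge> 1" and s: "\<sigma> > 0" using assms by auto
  define K where "K = \<sigma>^2 / (pi * sqrt (log 2 (exp 1)))"
  have ae1: "AE z in supersample n \<mu> \<sigma>. ennreal (Gf n z) \<le> ennreal (cgf_star_inv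
              (map_pmf (\<lambda>(r, w). Etil n z r w) (decoupled n z))
              (mutual_info_pmf (map_pmf (\<lambda>r. (Wout n z r, r)) (Rdist n))))"
    using ae_inj[OF s, of n \<mu>]
  proof eventually_elim
    case (elim z)
    have "Gf n z \<le> cgf_star_inv (map_pmf (\<lambda>(r, w). Etil n z r w) (decoupled n z)) (ln (card (PP n)))"
      by (rule star_inv_ge) (rule cgf_full[OF n])
    then show ?case unfolding MI_full[OF elim] by (rule ennreal_leI)
  qed
  have int1: "(\<integral>\<^sup>+z. ennreal (Gf n z) \<partial>supersample n \<mu> \<sigma>) = ennreal (1 / real n) * (\<Sum>i=1..n. \<integral>\<^sup>+z. ennreal (Gi n z i) \<partial>supersample n \<mu> \<sigma>)"
  proof -
    have "(\<integral>\<^sup>+z. ennreal (Gf n z) \<partial>supersample n \<mu> \<sigma>) = (\<integral>\<^sup>+z. ennreal (1 / real n) * (\<Sum>i=1..n. ennreal (Gi n z i)) \<partial>supersample n \<mu> \<sigma>)"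
    proof (intro nn_integral_cong)
      fix z
      have "ennreal (Gf n z) = ennreal (1 / real n * (\<Sum>i=1..n. Gi n z i))" unfolding Gf_eq by simp
      also have "\<dots> = ennreal (1 / real n) * ennreal (\<Sum>i=1..n. Gi n z i)"
        by (rule ennreal_mult) (auto intro: sum_nonneg Gi_nonneg)
      also have "\<dots> = ennreal (1 / real n) * (\<Sum>i=1..n. ennreal (Gi n z i))"
        by (subst sum_ennreal) (auto intro: Gi_nonneg)
      finally show "ennreal (Gf n z) = ennreal (1 / real n) * (\<Sum>i=1..n. ennreal (Gi n z i))" .
    qed
    also have "\<dots> = ennreal (1 / real n) * (\<integral>\<^sup>+z. (\<Sum>i=1..n. ennreal (Gi n z i)) \<partial>supersample n \<mu> \<sigma>)"
      by (rule nn_integral_cmult) (intro borel_measurable_sum meas_Gi)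
    also have "\<dots> = ennreal (1 / real n) * (\<Sum>i=1..n. \<integral>\<^sup>+z. ennreal (Gi n z i) \<partial>supersample n \<mu> \<sigma>)"
      by (subst nn_integral_sum) (auto intro: meas_Gi)
    finally show ?thesis .
  qed
  have c1: "ennreal K \<le> (\<integral>\<^sup>+z. ennreal (Gf n z) \<partial>supersample n \<mu> \<sigma>)"
    unfolding int1 K_def by (intro avg_K[OF n] int_Gi[OF s n]) auto
  have c2: "ennreal K \<le> (\<integral>\<^sup>+ z. ennreal (cgf_star_inv
              (map_pmf (\<lambda>(r, w). Etil_i z i r w) (decoupled n z))
              (mutual_info_pmf (map_pmf (\<lambda>r. (Wout n z r, r i)) (Rdist n))))
            \<partial>supersample n \<mu> \<sigma>)" if i: "i \<in> {1..n}" for i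
  proof -
    have ae: "AE z in supersample n \<mu> \<sigma>. ennreal (Gi n z i) \<le> ennreal (cgf_star_inv
              (map_pmf (\<lambda>(r, w). Etil_i z i r w) (decoupled n z))
              (mutual_info_pmf (map_pmf (\<lambda>r. (Wout n z r, r i)) (Rdist n))))"
      using ae_inj[OF s, of n \<mu>]
    proof eventually_elim
      case (elim z)
      have "Gi n z i \<le> cgf_star_inv (map_pmf (\<lambda>(r, w). Etil_i z i r w) (decoupled n z)) (ln 2)"
        by (rule star_inv_ge) (rule cgf_ind[OF i])
      then show ?case unfolding MI_ind[OF elim i] by (rule ennreal_leI)
    qed
    have "ennreal K \<le> (\<integral>\<^sup>+z. ennreal (Gi n z i) \<partial>supersample n \<mu> \<sigma>)"
      unfolding K_def by (rule int_Gi[OF s n i])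
    also have "\<dots> \<le> (\<integral>\<^sup>+ z. ennreal (cgf_star_inv
              (map_pmf (\<lambda>(r, w). Etil_i z i r w) (decoupled n z))
              (mutual_info_pmf (map_pmf (\<lambda>r. (Wout n z r, r i)) (Rdist n))))
            \<partial>supersample n \<mu> \<sigma>)"
      by (rule nn_integral_mono_AE[OF ae])
    finally show ?thesis .
  qed
  have "ennreal K \<le> (\<integral>\<^sup>+ z. ennreal (cgf_star_inv
              (map_pmf (\<lambda>(r, w). Etil n z r w) (decoupled n z))
              (mutual_info_pmf (map_pmf (\<lambda>r. (Wout n z r, r)) (Rdist n))))
            \<partial>supersample n \<mu> \<sigma>)"
    using c1 nn_integral_mono_AE[OF ae1] by (rule order_trans)
  moreover have "ennreal K \<le> ennreal (1 / real n) *
           (\<Sum>i=1..n. \<integral>\<^sup>+ z. ennreal (cgf_star_inv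
              (map_pmf (\<lambda>(r, w). Etil_i z i r w) (decoupled n z))
              (mutual_info_pmf (map_pmf (\<lambda>r. (Wout n z r, r i)) (Rdist n))))
            \<partial>supersample n \<mu> \<sigma>)"
    by (rule avg_K[OF n c2])
  ultimately show ?thesis unfolding K_def by simp
qed

end
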